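(* Let $N:[0,\infty)\to\mathbb R$, $T>0$, $A>0$, an integer $\ell\ge0$, $\delta>0$, and a finite set $\mathcal T\subset[0,T]$ with $\operatorname{sep}(\mathcal T)\ge4(\ell+1)\delta$ be given. Let \[ \widehat{\mathcal T}\subset\Big\{t\in[0,T]:\Big|\tfrac1\delta\Delta^{(\ell+1)}_\delta N(t)\Big|\ge\tfrac A2\Big\} \] be a subset of maximal size satisfying $\operatorname{sep}(\widehat{\mathcal T})>2(\ell+1)\delta$. If \[ \mathcal T\subseteq\Big\{t\in[\ell\delta,T]:\Big|\tfrac1\delta\Delta^{(\ell+1)}_\delta N(t)\Big|\ge\tfrac A2\Big\}\subseteq\big\{t\in[0,T]:\exists t'\in\mathcal T\text{ with }|t-t'|\le(\ell+1)\delta\big\}, \] then $|\mathcal T|=|\widehat{\mathcal T}|$ and $d_{\max}(\mathcal T,\widehat{\mathcal T})\le2(\ell+1)\delta$.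
   Context: $\Delta^{(j)}_\delta N(t):=\sum_{i=0}^{j}(-1)^{j-i}\binom{j}{i}N(t+(i-j+1)\delta)$, defined for $t\ge(j-1)\delta$ (sets above consist of $t$ where it is defined). $\operatorname{sep}(S):=\min\{|a-b|:a,b\in S,a\ne b\}$, $=\infty$ if no such pair. For finite $\mathcal S,\mathcal T$ with $|\mathcal S|=|\mathcal T|$: $d_{\max}=0$ if both empty, otherwise with sorted elements $s_1<\dots<s_k$, $t_1<\dots<t_k$, $d_{\max}(\mathcal S,\mathcal T)=\max_i|s_i-t_i|$. *)

theory Defs
  imports Complex_Main "HOL-Library.Extended_Real"
begin

text \<open>Finite difference operator: defined (meaningfully) for t \<ge> (j-1) delta.\<close>
definition fdiff :: "nat \<Rightarrow> real \<Rightarrow> (real \<Rightarrow> real) \<Rightarrow> real \<Rightarrow> real" where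
  "fdiff j \<delta> N t = (\<Sum>i=0..j. (-1) ^ (j - i) * real (j choose i)
                          * N (t + (real i - real j + 1) * \<delta>))"

text \<open>Separation of a set: infimum of distances of distinct pairs; infinity if no pair.\<close>
definition sep :: "real set \<Rightarrow> ereal" where
  "sep S = Inf {ereal \<bar>a - b\<bar> | a b. a \<in> S \<and> b \<in> S \<and> a \<noteq> b}"

definition dmax :: "real set \<Rightarrow> real set \<Rightarrow> real" where
  "dmax S T = (if S = {} \<and> T = {} then 0 else
      Max {\<bar>sorted_list_of_set S ! i - sorted_list_of_set T ! i\<bar> | i. i < card S})"

end

theory Submission
  imports Defs
begin

lemma sep_ge_D:
  assumes "sep S \<ge> ereal c" "a \<in> S" "b \<in> S" "a \<noteq> b"
  shows "\<bar>a - b\<bar> \<ge> c"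
proof -
  have "sep S \<le> ereal \<bar>a - b\<bar>" unfolding sep_def
    by (rule Inf_lower) (use assms in blast)
  with assms(1) have "ereal c \<le> ereal \<bar>a - b\<bar>" by (rule order_trans)
  thus ?thesis by simp
qed

lemma sep_gt_D:
  assumes "sep S > ereal c" "a \<in> S" "b \<in> S" "a \<noteq> b"
  shows "\<bar>a - b\<bar> > c"
proof -
  have "sep S \<le> ereal \<bar>a - b\<bar>" unfolding sep_def
    by (rule Inf_lower) (use assms in blast)
  with assms(1) have "ereal c < ereal \<bar>a - b\<bar>" by (rule less_le_trans)
  thus ?thesis by simp
qed

lemma sorted_map_mono:
  assumes "finite A" "strict_mono_on A f" "f ` A = B"
  shows "sorted_list_of_set B = map f (sorted_list_of_set A)"
proof -
  let ?xs = "sorted_list_of_set A"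
  have sw: "sorted_wrt (<) ?xs" using assms(1) by simp
  have set: "set ?xs = A" using assms(1) by simp
  have "sorted_wrt (<) (map f ?xs)"
    unfolding sorted_wrt_map
    by (rule sorted_wrt_mono_rel[OF _ sw]) (use set assms(2) in \<open>auto intro: strict_mono_onD\<close>)
  moreover have "set (map f ?xs) = B" using set assms(3) by simp
  moreover have "length (map f ?xs) = card B"
  proof -
    have "inj_on f A" using assms(2) by (rule strict_mono_on_imp_inj_on)
    hence "card B = card A" using assms(3) card_image by blast
    thus ?thesis using assms(1) by simp
  qed
  moreover have "finite B" using assms by blast
  ultimately show ?thesis using sorted_list_of_set_unique[of B "map f ?xs"] by blast
qed

theorem proposition3p2:
  fixes N :: "real \<Rightarrow> real" and T A \<delta> :: real and l :: nat
    and Ts Th :: "real set"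
  assumes "T > 0" and "A > 0" and "\<delta> > 0"
    and "finite Ts" and "Ts \<subseteq> {0..T}"
    and "sep Ts \<ge> ereal (4 * (real l + 1) * \<delta>)"
    and "finite Th"
    and "Th \<subseteq> {t. real l * \<delta> \<le> t \<and> t \<le> T \<and> \<bar>fdiff (l+1) \<delta> N t / \<delta>\<bar> \<ge> A / 2}"
    and "sep Th > ereal (2 * (real l + 1) * \<delta>)"
    and "\<forall>U. finite U \<and>
              U \<subseteq> {t. real l * \<delta> \<le> t \<and> t \<le> T \<and> \<bar>fdiff (l+1) \<delta> N t / \<delta>\<bar> \<ge> A / 2} \<and>
              sep U > ereal (2 * (real l + 1) * \<delta>) \<longrightarrow> card U \<le> card Th"
    and "Ts \<subseteq> {t. real l * \<delta> \<le> t \<and> t \<le> T \<and> \<bar>fdiff (l+1) \<delta> N t / \<delta>\<bar> \<ge> A / 2}"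
    and "{t. real l * \<delta> \<le> t \<and> t \<le> T \<and> \<bar>fdiff (l+1) \<delta> N t / \<delta>\<bar> \<ge> A / 2}
           \<subseteq> {t. 0 \<le> t \<and> t \<le> T \<and> (\<exists>t'\<in>Ts. \<bar>t - t'\<bar> \<le> (real l + 1) * \<delta>)}"
  shows "card Ts = card Th \<and> dmax Ts Th \<le> 2 * (real l + 1) * \<delta>"
proof -
  define r where "r = (real l + 1) * \<delta>"
  have r0: "r > 0" using assms(3) unfolding r_def by simp
  have e4: "4 * (real l + 1) * \<delta> = 4 * r" unfolding r_def by simp
  have e2: "2 * (real l + 1) * \<delta> = 2 * r" unfolding r_def by simp
  have sTs: "\<And>a b. a \<in> Ts \<Longrightarrow> b \<in> Ts \<Longrightarrow> a \<noteq> b \<Longrightarrow> \<bar>a - b\<bar> \<ge> 4 * r"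
    using sep_ge_D[OF assms(6)[unfolded e4]] by blast
  have sTh: "\<And>a b. a \<in> Th \<Longrightarrow> b \<in> Th \<Longrightarrow> a \<noteq> b \<Longrightarrow> \<bar>a - b\<bar> > 2 * r"
    using sep_gt_D[OF assms(9)[unfolded e2]] by blast
  have "sep Ts > ereal (2 * (real l + 1) * \<delta>)"
  proof -
    have "ereal (2 * (real l + 1) * \<delta>) < ereal (4 * (real l + 1) * \<delta>)"
      using assms(3) by simp
    thus ?thesis using assms(6) by (rule less_le_trans)
  qed
  hence c1: "card Ts \<le> card Th" using assms(10,11,4) by blast
  have near: "\<And>h. h \<in> Th \<Longrightarrow> \<exists>t\<in>Ts. \<bar>h - t\<bar> \<le> r"
    using assms(8,12) unfolding r_def by blast
  define f where "f h = (SOME t. t \<in> Ts \<and> \<bar>h - t\<bar> \<le> r)" for h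
  have fp: "f h \<in> Ts \<and> \<bar>h - f h\<bar> \<le> r" if "h \<in> Th" for h
    unfolding f_def using someI_ex[OF near[OF that, unfolded Bex_def]] .
  have inj: "inj_on f Th"
  proof (rule inj_onI)
    fix x y assume xy: "x \<in> Th" "y \<in> Th" "f x = f y"
    show "x = y"
    proof (rule ccontr)
      assume "x \<noteq> y"
      hence "\<bar>x - y\<bar> > 2 * r" using sTh xy by blast
      moreover have "\<bar>x - f x\<bar> \<le> r" using fp[OF xy(1)] by blast
      moreover have "\<bar>y - f y\<bar> \<le> r" using fp[OF xy(2)] by blast
      ultimately show False using xy(3) by linarith
    qed
  qed
  have sub: "f ` Th \<subseteq> Ts" using fp by blast
  have c2: "card Th \<le> card Ts" using card_inj_on_le[OF inj sub assms(4)] .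
  have ceq: "card Ts = card Th" using c1 c2 by simp
  have img: "f ` Th = Ts"
    using card_subset_eq[OF assms(4) sub] card_image[OF inj] ceq by simp
  have smono: "strict_mono_on Th f"
  proof (rule strict_mono_onI)
    fix x y assume xy: "x \<in> Th" "y \<in> Th" "x < y"
    have "f x \<noteq> f y" using inj xy by (metis inj_on_eq_iff less_irrefl)
    hence "\<bar>f x - f y\<bar> \<ge> 4 * r" using sTs fp xy by blast
    moreover have "\<bar>x - f x\<bar> \<le> r" "\<bar>y - f y\<bar> \<le> r" using fp xy by auto
    ultimately show "f x < f y" using xy(3) r0 by linarith
  qed
  have sl: "sorted_list_of_set Ts = map f (sorted_list_of_set Th)"
    using sorted_map_mono[OF assms(7) smono img] .
  have bound: "\<bar>sorted_list_of_set Ts ! i - sorted_list_of_set Th ! i\<bar> \<le> r"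
    if "i < card Ts" for i
  proof -
    have il: "i < length (sorted_list_of_set Th)" using that ceq by simp
    hence mem: "sorted_list_of_set Th ! i \<in> Th"
      using nth_mem assms(7) by (metis set_sorted_list_of_set)
    have "sorted_list_of_set Ts ! i = f (sorted_list_of_set Th ! i)"
      using sl il by simp
    thus ?thesis using fp[OF mem] by (simp add: abs_minus_commute)
  qed
  have "dmax Ts Th \<le> r"
  proof (cases "Ts = {} \<and> Th = {}")
    case True thus ?thesis unfolding dmax_def using r0 by simp
  next
    case False
    hence "card Ts > 0" using ceq assms(4,7) by (metis card_gt_0_iff)
    hence ne: "{\<bar>sorted_list_of_set Ts ! i - sorted_list_of_set Th ! i\<bar> | i. i < card Ts} \<noteq> {}"
      by blast
    have fin: "finite {\<bar>sorted_list_of_set Ts ! i - sorted_list_of_set Th ! i\<bar> | i. i < card Ts}"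
      by simp
    show ?thesis unfolding dmax_def using False Max_le_iff[OF fin ne] bound by auto
  qed
  moreover have "r \<le> 2 * (real l + 1) * \<delta>" using r0 e2 by linarith
  ultimately show ?thesis using ceq by linarith
qed

end
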